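(* Let $B$ be a unital commutative semi-simple Banach algebra whose maximal ideal space $X$ is connected, and let $T$ be a unital endomorphism of $B$ which is a Riesz operator, induced by the selfmap $\phi$ of $X$. Then $\bigcap_{n=0}^\infty \phi_n(X)=\{x_0\}$ for some $x_0\in X$, and $x_0$ is the unique fixed point of $\phi$.
   Context: The maximal ideal space $X$ of $B$ carries the weak-* (Gelfand) topology, and $\hat f$ denotes the Gelfand transform of $f\in B$. A unital endomorphism $T$ of $B$ (linear, multiplicative, $T1=1$) is said to be induced by a selfmap $\phi$ of $X$ if $\phi$ is weak-* continuous and $\widehat{Tf}(x)=\hat f(\phi(x))$ for all $f\in B$, $x\in X$. $\phi_n$ denotes the $n$-th iterate of $\phi$, with $\phi_0$ the identity. A bounded linear operator $T$ on a Banach space is a Riesz operator if $\lim_{n\to\infty}\left[\inf\{\|T^n-K\|: K \text{ compact}\}\right]^{1/n}=0$ (equivalently, $\lambda-T$ is Fredholm of index zero with finite ascent and descent for every nonzero $\lambda$, and the nonzero spectrum consists of eigenvalues accumulating at most at $0$). *)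

theory Defs
  imports "HOL-Analysis.Analysis"
begin

class comm_cbanach_algebra_1 = comm_ring_1 + real_normed_algebra_1 + banach +
  fixes scaleC :: "complex \<Rightarrow> 'a \<Rightarrow> 'a"
  assumes scaleC_of_real: "scaleC (complex_of_real r) x = scaleR r x"
    and scaleC_add_left: "scaleC (a + b) x = scaleC a x + scaleC b x"
    and scaleC_add_right: "scaleC a (x + y) = scaleC a x + scaleC a y"
    and scaleC_scaleC: "scaleC a (scaleC b x) = scaleC (a * b) x"
    and scaleC_one: "scaleC 1 x = x"
    and norm_scaleC: "norm (scaleC a x) = cmod a * norm x"
    and scaleC_mult_left: "scaleC a (x * y) = scaleC a x * y"

definition clinear :: "('a::comm_cbanach_algebra_1 \<Rightarrow> 'b::comm_cbanach_algebra_1) \<Rightarrow> bool" where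
  "clinear T \<longleftrightarrow> (\<forall>x y. T (x + y) = T x + T y) \<and> (\<forall>c x. T (scaleC c x) = scaleC c (T x))"

definition character :: "('a::comm_cbanach_algebra_1 \<Rightarrow> complex) \<Rightarrow> bool" where
  "character h \<longleftrightarrow> (\<forall>x y. h (x + y) = h x + h y) \<and> (\<forall>c x. h (scaleC c x) = c * h x)
     \<and> (\<forall>x y. h (x * y) = h x * h y) \<and> h 1 = 1"

text \<open>The maximal ideal space, realised as the set of characters; as a subset of
the function space 'a \<Rightarrow> complex with the product topology it carries exactly the
weak-* (Gelfand) topology. The Gelfand transform of f is \<lambda>x. x f.\<close>
definition max_ideal_space :: "('a::comm_cbanach_algebra_1 \<Rightarrow> complex) set" where
  "max_ideal_space = {h. character h}"

text \<open>Semi-simple: the Gelfand transform is injective (the radical, i.e. the intersection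
of all maximal ideals = kernels of characters, is zero).\<close>
definition semisimple :: "'a::comm_cbanach_algebra_1 itself \<Rightarrow> bool" where
  "semisimple _ \<longleftrightarrow> (\<forall>f::'a. (\<forall>x\<in>max_ideal_space. x f = 0) \<longrightarrow> f = 0)"

definition unital_endomorphism :: "('a::comm_cbanach_algebra_1 \<Rightarrow> 'a) \<Rightarrow> bool" where
  "unital_endomorphism T \<longleftrightarrow> clinear T \<and> (\<forall>x y. T (x * y) = T x * T y) \<and> T 1 = 1"

definition induced_by :: "('a::comm_cbanach_algebra_1 \<Rightarrow> 'a) \<Rightarrow>
    (('a \<Rightarrow> complex) \<Rightarrow> ('a \<Rightarrow> complex)) \<Rightarrow> bool" where
  "induced_by T \<phi> \<longleftrightarrow> \<phi> ` max_ideal_space \<subseteq> max_ideal_space \<and>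
     continuous_on max_ideal_space \<phi> \<and>
     (\<forall>f. \<forall>x\<in>max_ideal_space. x (T f) = (\<phi> x) f)"

definition bounded_operator :: "('a::comm_cbanach_algebra_1 \<Rightarrow> 'a) \<Rightarrow> bool" where
  "bounded_operator T \<longleftrightarrow> clinear T \<and> bounded_linear T"

definition compact_operator :: "('a::comm_cbanach_algebra_1 \<Rightarrow> 'a) \<Rightarrow> bool" where
  "compact_operator K \<longleftrightarrow> clinear K \<and> compact (closure (K ` cball 0 1))"

definition ess_norm :: "('a::comm_cbanach_algebra_1 \<Rightarrow> 'a) \<Rightarrow> real" where
  "ess_norm S = Inf {onorm (\<lambda>x. S x - K x) | K. compact_operator K}"

definition riesz_operator :: "('a::comm_cbanach_algebra_1 \<Rightarrow> 'a) \<Rightarrow> bool" where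
  "riesz_operator T \<longleftrightarrow> bounded_operator T \<and>
     ((\<lambda>n. root n (ess_norm (T ^^ n))) \<longlonglongrightarrow> 0)"

end

theory Submission
  imports Defs
begin

lemma char_add: "character h \<Longrightarrow> h (x + y) = h x + h y"
  by (simp add: character_def)
lemma char_scaleC: "character h \<Longrightarrow> h (scaleC c x) = c * h x"
  by (simp add: character_def)
lemma char_mult: "character h \<Longrightarrow> h (x * y) = h x * h y"
  by (simp add: character_def)
lemma char_one: "character h \<Longrightarrow> h 1 = 1"
  by (simp add: character_def)
lemma char_zero: "character h \<Longrightarrow> h 0 = 0"
  using char_add[of h 0 0] by simp
lemma char_diff: "character h \<Longrightarrow> h (x - y) = h x - h y"
  using char_add[of h y "x - y"] by simp
lemma char_scaleR: "character (h::'a::comm_cbanach_algebra_1 \<Rightarrow> complex) \<Longrightarrow> h (scaleR r x) = of_real r * h x"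
  by (metis char_scaleC scaleC_of_real)

lemma neumann:
  fixes x :: "'a::{real_normed_algebra_1, banach}"
  assumes "norm x < 1"
  shows "\<exists>s. (1 - x) * s = 1"
proof -
  have sn: "summable (\<lambda>n. norm (x ^ n))"
  proof (rule summable_comparison_test[OF _ summable_geometric[of "norm x"]])
    show "\<exists>N. \<forall>n\<ge>N. norm (norm (x ^ n)) \<le> norm x ^ n"
      using norm_power_ineq[of x] by simp
  qed (use assms in simp)
  hence s: "summable (\<lambda>n. x ^ n)" by (rule summable_norm_cancel)
  define S where "S = suminf (\<lambda>n. x ^ n)"
  have "(\<lambda>n. x ^ Suc n) sums (S - 1)"
    using s unfolding S_def sums_Suc_iff[of "\<lambda>n. x ^ n"] by (simp add: summable_sums)
  moreover have "(\<lambda>n. x * x ^ n) sums (x * S)"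
    using s unfolding S_def by (intro sums_mult summable_sums)
  ultimately have "x * S = S - 1" by (simp add: sums_unique2)
  hence "(1 - x) * S = 1" by (simp add: algebra_simps)
  thus ?thesis by blast
qed

lemma char_bound:
  fixes h :: "'a::comm_cbanach_algebra_1 \<Rightarrow> complex"
  assumes h: "character h"
  shows "norm (h f) \<le> norm f"
proof (rule ccontr)
  assume "\<not> ?thesis"
  hence lt: "norm f < norm (h f)" by simp
  define c where "c = h f"
  have c0: "c \<noteq> 0" using lt c_def by auto
  define x where "x = scaleC (1 / c) f"
  have "norm x = norm f / cmod c" by (simp add: x_def norm_scaleC norm_divide)
  also have "\<dots> < 1" using lt c0 c_def by (simp add: divide_less_eq)
  finally obtain s where s: "(1 - x) * s = 1" using neumann by blast
  have "h (1 - x) = 0" using h c0 by (simp add: char_diff char_one x_def char_scaleC c_def)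
  hence "h ((1 - x) * s) = 0" using h by (simp add: char_mult)
  thus False using s h by (simp add: char_one)
qed

lemma Hausdorff_fun: "Hausdorff_space (euclidean :: ('a \<Rightarrow> complex) topology)"
  by (metis Hausdorff_space_euclidean Hausdorff_space_product_topology euclidean_product_topology)

lemma compact_imp_closed_fun:
  fixes S :: "('a \<Rightarrow> complex) set"
  assumes "compact S" shows "closed S"
  using compactin_imp_closedin[OF Hausdorff_fun, of S] assms by simp

lemma closed_max_ideal_space: "closed (max_ideal_space :: ('a::comm_cbanach_algebra_1 \<Rightarrow> complex) set)"
proof -
  have eq: "(max_ideal_space :: ('a \<Rightarrow> complex) set) =
     (\<Inter>p\<in>UNIV. {h. h (fst p + snd p) = h (fst p) + h (snd p)}) \<inter>
     (\<Inter>p\<in>UNIV. {h. h (scaleC (fst p) (snd p)) = fst p * h (snd p)}) \<inter>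
     (\<Inter>p\<in>UNIV. {h. h (fst p * snd p) = h (fst p) * h (snd p)}) \<inter> {h. h 1 = 1}"
    by (auto simp: max_ideal_space_def character_def)
  show ?thesis unfolding eq
    by (intro closed_Int closed_INT ballI closed_Collect_eq continuous_intros) auto
qed

lemma compact_max_ideal_space: "compact (max_ideal_space :: ('a::comm_cbanach_algebra_1 \<Rightarrow> complex) set)"
proof -
  define P where "P = PiE (UNIV::'a set) (\<lambda>f. cball (0::complex) (norm f))"
  have "compactin (product_topology (\<lambda>i. euclidean) UNIV) P"
    unfolding P_def by (simp add: compactin_PiE)
  hence cP: "compact P" by (simp add: euclidean_product_topology)
  have "max_ideal_space \<subseteq> P"
    by (auto simp: P_def max_ideal_space_def char_bound)
  hence "max_ideal_space = P \<inter> max_ideal_space" by blast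
  thus ?thesis using compact_Int_closed[OF cP closed_max_ideal_space] by metis
qed

locale dyn =
  fixes \<phi> :: "('a::comm_cbanach_algebra_1 \<Rightarrow> complex) \<Rightarrow> ('a \<Rightarrow> complex)"
  assumes maps: "\<phi> ` max_ideal_space \<subseteq> max_ideal_space"
    and cont: "continuous_on max_ideal_space \<phi>"
begin

abbreviation "XX \<equiv> (max_ideal_space :: ('a \<Rightarrow> complex) set)"
definition "Y n = (\<phi> ^^ n) ` XX"
definition "KK = (\<Inter>n. Y n)"

lemma funpow_maps: "(\<phi> ^^ n) ` XX \<subseteq> XX"
proof (induction n)
  case (Suc n)
  show ?case
  proof
    fix y assume "y \<in> (\<phi> ^^ Suc n) ` XX"
    then obtain x where x: "x \<in> XX" "y = \<phi> ((\<phi> ^^ n) x)" by auto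
    have "(\<phi> ^^ n) x \<in> XX" using Suc x(1) by blast
    thus "y \<in> XX" using maps x(2) by blast
  qed
qed simp

lemma funpow_mem: "x \<in> XX \<Longrightarrow> (\<phi> ^^ n) x \<in> XX"
  using funpow_maps by blast

lemma cont_funpow: "continuous_on XX (\<phi> ^^ n)"
proof (induction n)
  case 0
  then show ?case by (simp add: continuous_on_id)
next
  case (Suc n)
  have c2: "continuous_on ((\<phi> ^^ n) ` XX) \<phi>"
    by (rule continuous_on_subset[OF cont funpow_maps])
  have "continuous_on XX (\<phi> \<circ> (\<phi> ^^ n))"
    by (rule continuous_on_compose[OF Suc c2])
  then show ?case by (simp only: funpow.simps)
qed

lemma compact_Y: "compact (Y n)"
  unfolding Y_def by (rule compact_continuous_image[OF cont_funpow compact_max_ideal_space])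

lemma closed_Y: "closed (Y n)"
  by (rule compact_imp_closed_fun[OF compact_Y])

lemma Y_sub: "Y n \<subseteq> XX"
  unfolding Y_def using funpow_maps by blast

lemma funpow_add': "f ^^ (k + m) = (f ^^ m) \<circ> (f ^^ k)"
  by (metis add.commute funpow_add)

lemma Y_decr: "m \<le> n \<Longrightarrow> Y n \<subseteq> Y m"
proof -
  assume "m \<le> n"
  then obtain k where n: "n = k + m" by (metis le_add_diff_inverse2)
  have "Y n = (\<phi> ^^ m) ` ((\<phi> ^^ k) ` XX)"
    unfolding Y_def n funpow_add' image_comp by simp
  also have "\<dots> \<subseteq> Y m" unfolding Y_def using funpow_maps[of k] by blast
  finally show ?thesis .
qed

lemma KK_sub: "KK \<subseteq> XX"
  unfolding KK_def using Y_sub[of 0] by blast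

lemma fip:
  assumes S: "compact S" and ne: "\<And>n. S \<inter> Y n \<noteq> {}"
  shows "S \<inter> KK \<noteq> {}"
proof -
  have "S \<inter> (\<Inter>i\<in>UNIV. Y i) \<noteq> {}"
  proof (rule compact_imp_fip_image[OF S])
    fix I' :: "nat set" assume fin: "finite I'" and "I' \<subseteq> UNIV"
    have "Y (Max (insert 0 I')) \<subseteq> (\<Inter>i\<in>I'. Y i)"
    proof (rule INT_greatest)
      fix i assume "i \<in> I'"
      hence "i \<le> Max (insert 0 I')" using fin by simp
      thus "Y (Max (insert 0 I')) \<subseteq> Y i" by (rule Y_decr)
    qed
    thus "S \<inter> (\<Inter>i\<in>I'. Y i) \<noteq> {}" using ne[of "Max (insert 0 I')"] by blast
  qed (rule closed_Y)
  thus ?thesis unfolding KK_def by simp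
qed

lemma KK_ne: assumes "XX \<noteq> {}" shows "KK \<noteq> {}"
proof -
  have "XX \<inter> Y n \<noteq> {}" for n using assms Y_sub[of n] unfolding Y_def by blast
  thus ?thesis using fip[OF compact_max_ideal_space] by blast
qed

lemma closed_fiber: "closed {x \<in> XX. (\<phi> ^^ m) x = k}"
proof -
  have eq: "{x \<in> XX. (\<phi> ^^ m) x = k} = (\<Inter>f\<in>UNIV. {x \<in> XX. (\<lambda>x. (\<phi> ^^ m) x f) x = k f})"
    by (auto simp: fun_eq_iff)
  have c: "continuous_on XX (\<lambda>x. (\<phi> ^^ m) x f)" for f
  proof -
    have "continuous_on XX ((\<lambda>g. g f) \<circ> (\<phi> ^^ m))"
      by (rule continuous_on_compose[OF cont_funpow continuous_on_subset[OF continuous_on_product_coordinates]]) simp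
    thus ?thesis by (simp add: o_def)
  qed
  have "closed {x \<in> XX. (\<lambda>x. (\<phi> ^^ m) x f) x = k f}" for f
    by (rule continuous_closed_preimage_constant[OF c closed_max_ideal_space])
  thus ?thesis unfolding eq by blast
qed

lemma KK_surj:
  assumes k: "k \<in> KK" shows "\<exists>k'\<in>KK. (\<phi> ^^ m) k' = k"
proof -
  define S where "S = {x \<in> XX. (\<phi> ^^ m) x = k}"
  have "S = XX \<inter> {x \<in> XX. (\<phi> ^^ m) x = k}" unfolding S_def by blast
  hence cS: "compact S"
    using compact_Int_closed[OF compact_max_ideal_space closed_fiber] by metis
  have "S \<inter> Y n \<noteq> {}" for n
  proof -
    have "k \<in> Y (n + m)" using k unfolding KK_def by blast
    then obtain z where z: "z \<in> XX" "k = (\<phi> ^^ (n + m)) z" unfolding Y_def by blast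
    have "(\<phi> ^^ m) ((\<phi> ^^ n) z) = k" using z(2) by (simp add: funpow_add')
    hence "(\<phi> ^^ n) z \<in> S \<inter> Y n" unfolding S_def Y_def using z(1) funpow_mem by blast
    thus ?thesis by blast
  qed
  from fip[OF cS this] show ?thesis unfolding S_def by blast
qed

lemma avoid:
  assumes V: "closed V" and dis: "V \<inter> KK = {}"
  shows "\<exists>n. V \<inter> Y n = {}"
proof (rule ccontr)
  assume "\<not> ?thesis"
  hence "(XX \<inter> V) \<inter> Y n \<noteq> {}" for n using Y_sub[of n] by blast
  from fip[OF compact_Int_closed[OF compact_max_ideal_space V] this] dis show False by blast
qed

end

definition dt :: "nat \<Rightarrow> (nat \<Rightarrow> 'b \<Rightarrow> complex) \<Rightarrow> (nat \<Rightarrow> 'b) \<Rightarrow> complex" where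
  "dt N k g = (\<Sum>\<sigma>\<in>{\<sigma>. \<sigma> permutes {..<N}}. of_int (sign \<sigma>) * (\<Prod>j<N. k (\<sigma> j) (g j)))"

lemma dt_cong:
  assumes "\<And>i j. i < N \<Longrightarrow> j < N \<Longrightarrow> k i (g j) = k' i (g' j)"
  shows "dt N k g = dt N k' g'"
  unfolding dt_def
proof (rule sum.cong[OF refl])
  fix \<sigma> assume "\<sigma> \<in> {\<sigma>. \<sigma> permutes {..<N}}"
  hence "\<And>j. j < N \<Longrightarrow> \<sigma> j < N" by (auto dest: permutes_in_image)
  thus "of_int (sign \<sigma>) * (\<Prod>j<N. k (\<sigma> j) (g j)) = of_int (sign \<sigma>) * (\<Prod>j<N. k' (\<sigma> j) (g' j))"
  proof -
    have "(\<Prod>j<N. k (\<sigma> j) (g j)) = (\<Prod>j<N. k' (\<sigma> j) (g' j))"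
      by (rule prod.cong[OF refl]) (use assms \<open>\<And>j. j < N \<Longrightarrow> \<sigma> j < N\<close> in auto)
    thus ?thesis by simp
  qed
qed

lemma dt_expand:
  assumes "\<And>i j. i < N \<Longrightarrow> j < N \<Longrightarrow> k i (g j) = k i (u j) + k i (v j)"
  shows "dt N k g = (\<Sum>A\<in>Pow {..<N}. dt N k (\<lambda>j. if j \<in> A then u j else v j))"
proof -
  have "of_int (sign \<sigma>) * (\<Prod>j<N. k (\<sigma> j) (g j)) =
        (\<Sum>A\<in>Pow {..<N}. of_int (sign \<sigma>) * (\<Prod>j<N. k (\<sigma> j) (if j \<in> A then u j else v j)))"
    if s: "\<sigma> permutes {..<N}" for \<sigma>
  proof -
    have sl: "\<And>j. j < N \<Longrightarrow> \<sigma> j < N" using s by (auto dest: permutes_in_image)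
    have "(\<Prod>j<N. k (\<sigma> j) (g j)) = (\<Prod>j<N. k (\<sigma> j) (u j) + k (\<sigma> j) (v j))"
      using assms sl by (intro prod.cong) auto
    also have "\<dots> = (\<Sum>A\<in>Pow {..<N}. (\<Prod>j\<in>A. k (\<sigma> j) (u j)) * (\<Prod>j\<in>{..<N}-A. k (\<sigma> j) (v j)))"
      by (rule prod_add) simp
    also have "\<dots> = (\<Sum>A\<in>Pow {..<N}. (\<Prod>j<N. k (\<sigma> j) (if j \<in> A then u j else v j)))"
    proof (rule sum.cong[OF refl])
      fix A assume A: "A \<in> Pow {..<N}"
      have "(\<Prod>j<N. k (\<sigma> j) (if j \<in> A then u j else v j)) =
            (\<Prod>j<N. (if j \<in> A then k (\<sigma> j) (u j) else k (\<sigma> j) (v j)))"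
        by (intro prod.cong) auto
      also have "\<dots> = (\<Prod>j\<in>{..<N} \<inter> {j. j \<in> A}. k (\<sigma> j) (u j)) * (\<Prod>j\<in>{..<N} \<inter> - {j. j \<in> A}. k (\<sigma> j) (v j))"
        by (rule prod.If_cases) simp
      also have "{..<N} \<inter> {j. j \<in> A} = A" using A by auto
      also have "{..<N} \<inter> - {j. j \<in> A} = {..<N} - A" by auto
      finally show "(\<Prod>j\<in>A. k (\<sigma> j) (u j)) * (\<Prod>j\<in>{..<N}-A. k (\<sigma> j) (v j)) =
            (\<Prod>j<N. k (\<sigma> j) (if j \<in> A then u j else v j))" by simp
    qed
    finally show ?thesis by (simp add: sum_distrib_left)
  qed
  hence "dt N k g = (\<Sum>\<sigma>\<in>{\<sigma>. \<sigma> permutes {..<N}}. \<Sum>A\<in>Pow {..<N}. of_int (sign \<sigma>) * (\<Prod>j<N. k (\<sigma> j) (if j \<in> A then u j else v j)))"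
    unfolding dt_def by (intro sum.cong) auto
  also have "\<dots> = (\<Sum>A\<in>Pow {..<N}. dt N k (\<lambda>j. if j \<in> A then u j else v j))"
    unfolding dt_def by (rule sum.swap)
  finally show ?thesis .
qed

lemma dt_scale:
  assumes "\<And>i j. i < N \<Longrightarrow> j < N \<Longrightarrow> k i (w j) = c j * k i (u j)"
  shows "dt N k w = (\<Prod>j<N. c j) * dt N k u"
proof -
  have "of_int (sign \<sigma>) * (\<Prod>j<N. k (\<sigma> j) (w j)) = (\<Prod>j<N. c j) * (of_int (sign \<sigma>) * (\<Prod>j<N. k (\<sigma> j) (u j)))"
    if s: "\<sigma> permutes {..<N}" for \<sigma>
  proof -
    have sl: "\<And>j. j < N \<Longrightarrow> \<sigma> j < N" using s by (auto dest: permutes_in_image)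
    have "(\<Prod>j<N. k (\<sigma> j) (w j)) = (\<Prod>j<N. c j * k (\<sigma> j) (u j))"
      using assms sl by (intro prod.cong) auto
    also have "\<dots> = (\<Prod>j<N. c j) * (\<Prod>j<N. k (\<sigma> j) (u j))" by (rule prod.distrib)
    finally show ?thesis by simp
  qed
  thus ?thesis unfolding dt_def sum_distrib_left by (intro sum.cong) auto
qed

lemma dt_ident:
  assumes ab: "a < N" "b < N" "a \<noteq> b" and g: "g a = g b"
  shows "dt N k g = 0"
proof -
  define \<tau> where "\<tau> = Transposition.transpose a b"
  have tp: "\<tau> permutes {..<N}" unfolding \<tau>_def using ab by (intro permutes_swap_id) auto
  have gt: "g (\<tau> j) = g j" for j unfolding \<tau>_def using g by (cases "j = a"; cases "j = b") auto
  define f where "f \<sigma> = of_int (sign \<sigma>) * (\<Prod>j<N. k (\<sigma> j) (g j))" for \<sigma>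
  have f: "f (\<sigma> \<circ> \<tau>) = - f \<sigma>" if s: "\<sigma> permutes {..<N}" for \<sigma>
  proof -
    have s1: "sign (\<sigma> \<circ> \<tau>) = sign \<sigma> * sign \<tau>"
      by (rule sign_compose) (use s tp permutation_permutes in blast)+
    have s2: "sign \<tau> = -1" unfolding \<tau>_def using ab by (simp add: sign_swap_id)
    have sg: "sign (\<sigma> \<circ> \<tau>) = - sign \<sigma>" using s1 s2 by (metis mult_minus1_right)
    have "(\<Prod>j<N. k ((\<sigma> \<circ> \<tau>) j) (g j)) = (\<Prod>j\<in>\<tau> ` {..<N}. k (\<sigma> j) (g j))"
    proof -
      have "inj_on \<tau> {..<N}" using tp by (meson permutes_inj_on)
      hence "(\<Prod>j\<in>\<tau> ` {..<N}. k (\<sigma> j) (g j)) = (\<Prod>j<N. k (\<sigma> (\<tau> j)) (g (\<tau> j)))"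
        by (simp add: prod.reindex)
      thus ?thesis using gt by simp
    qed
    also have "\<tau> ` {..<N} = {..<N}" using tp by (rule permutes_image)
    finally show ?thesis unfolding f_def sg by simp
  qed
  have "dt N k g = (\<Sum>\<sigma>\<in>{\<sigma>. \<sigma> permutes {..<N}}. f \<sigma>)" unfolding dt_def f_def by simp
  also have "\<dots> = (\<Sum>\<sigma>\<in>{\<sigma>. \<sigma> permutes {..<N}}. f (\<sigma> \<circ> \<tau>))"
  proof -
    have tt: "\<And>\<sigma>. \<sigma> \<circ> \<tau> \<circ> \<tau> = \<sigma>" by (simp add: \<tau>_def comp_assoc)
    have pc: "\<And>\<sigma>. \<sigma> permutes {..<N} \<Longrightarrow> \<sigma> \<circ> \<tau> permutes {..<N}"
      using tp by (simp add: permutes_compose)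
    show ?thesis
      by (rule sum.reindex_bij_witness[where i = "\<lambda>\<sigma>. \<sigma> \<circ> \<tau>" and j = "\<lambda>\<sigma>. \<sigma> \<circ> \<tau>"])
         (simp_all add: tt pc)
  qed
  also have "\<dots> = - (\<Sum>\<sigma>\<in>{\<sigma>. \<sigma> permutes {..<N}}. f \<sigma>)"
    using f by (simp add: sum_negf)
  finally show ?thesis unfolding dt_def f_def by simp
qed

lemma dt_bound:
  assumes "\<And>i j. i < N \<Longrightarrow> j < N \<Longrightarrow> norm (k i (g j)) \<le> 1"
  shows "norm (dt N k g) \<le> fact N"
proof -
  have "norm (dt N k g) \<le> (\<Sum>\<sigma>\<in>{\<sigma>. \<sigma> permutes {..<N}}. norm (of_int (sign \<sigma>) * (\<Prod>j<N. k (\<sigma> j) (g j)) :: complex))"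
    unfolding dt_def by (rule norm_sum)
  also have "\<dots> \<le> (\<Sum>\<sigma>\<in>{\<sigma>. \<sigma> permutes {..<N}}. 1)"
  proof (rule sum_mono)
    fix \<sigma> assume "\<sigma> \<in> {\<sigma>. \<sigma> permutes {..<N}}"
    hence sl: "\<And>j. j < N \<Longrightarrow> \<sigma> j < N" by (auto dest: permutes_in_image)
    have "norm (of_int (sign \<sigma>) :: complex) = 1" by (simp add: sign_def)
    moreover have "norm (\<Prod>j<N. k (\<sigma> j) (g j)) \<le> 1"
      unfolding prod_norm[symmetric] by (rule prod_le_1) (use assms sl in auto)
    ultimately show "norm (of_int (sign \<sigma>) * (\<Prod>j<N. k (\<sigma> j) (g j)) :: complex) \<le> 1"
      by (simp add: norm_mult)
  qed
  also have "\<dots> = fact N" using card_permutations[of "{..<N}" N] by simp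
  finally show ?thesis .
qed

lemma dt_delta:
  assumes "\<And>i j. i < N \<Longrightarrow> j < N \<Longrightarrow> k i (g j) = (if i = j then 1 else 0)"
  shows "dt N k g = 1"
proof -
  have "of_int (sign \<sigma>) * (\<Prod>j<N. k (\<sigma> j) (g j)) = (if \<sigma> = id then 1 else 0)"
    if s: "\<sigma> permutes {..<N}" for \<sigma>
  proof (cases "\<sigma> = id")
    case True
    then show ?thesis using assms by simp
  next
    case False
    then obtain j where j: "\<sigma> j \<noteq> j" by (metis eq_id_iff)
    hence jN: "j < N" using s permutes_not_in by fastforce
    have "\<sigma> j < N" using jN s by (auto dest: permutes_in_image)
    hence "k (\<sigma> j) (g j) = 0" using assms jN j by simp
    hence "(\<Prod>j<N. k (\<sigma> j) (g j)) = 0" using jN by (intro prod_zero) auto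
    then show ?thesis using False by simp
  qed
  hence "dt N k g = (\<Sum>\<sigma>\<in>{\<sigma>. \<sigma> permutes {..<N}}. (if \<sigma> = id then 1 else 0))"
    unfolding dt_def by (intro sum.cong) auto
  also have "\<dots> = 1" by (simp add: finite_permutations)
  finally show ?thesis .
qed

lemma char_prod:
  fixes h :: "'a::comm_cbanach_algebra_1 \<Rightarrow> complex"
  assumes h: "character h" and fin: "finite P"
  shows "h (\<Prod>p\<in>P. e p) = (\<Prod>p\<in>P. h (e p))"
  using fin by (induction P rule: finite_induct) (simp_all add: char_one[OF h] char_mult[OF h])

lemma sep:
  fixes a k :: "'a::comm_cbanach_algebra_1 \<Rightarrow> complex"
  assumes a: "character a" and k: "character k" and ne: "a \<noteq> k"
  shows "\<exists>e. a e = 1 \<and> k e = 0"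
proof -
  obtain f where f: "a f \<noteq> k f" using ne by auto
  define e where "e = scaleC (1 / (a f - k f)) (f - scaleC (k f) 1)"
  have "a e = 1" using a f by (simp add: e_def char_scaleC char_diff char_one)
  moreover have "k e = 0" using k by (simp add: e_def char_scaleC char_diff char_one)
  ultimately show ?thesis by blast
qed

lemma lagrange:
  fixes a :: "'a::comm_cbanach_algebra_1 \<Rightarrow> complex"
  assumes fin: "finite P" and P: "P \<subseteq> max_ideal_space" and a: "a \<in> max_ideal_space" and aP: "a \<notin> P"
  shows "\<exists>L. a L = 1 \<and> (\<forall>k\<in>P. k L = 0)"
proof -
  have "\<forall>k\<in>P. \<exists>e. a e = 1 \<and> k e = 0"
    using P a aP sep by (metis max_ideal_space_def mem_Collect_eq subsetD)
  then obtain e where e: "\<And>k. k \<in> P \<Longrightarrow> a (e k) = 1 \<and> k (e k) = 0" by metis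
  define L where "L = (\<Prod>k\<in>P. e k)"
  have ca: "character a" using a by (simp add: max_ideal_space_def)
  have "a L = 1" unfolding L_def using char_prod[OF ca fin] e by simp
  moreover have "k L = 0" if kP: "k \<in> P" for k
  proof -
    have ck: "character k" using kP P by (auto simp: max_ideal_space_def)
    have "k L = (\<Prod>k'\<in>P. k (e k'))" unfolding L_def by (rule char_prod[OF ck fin])
    also have "\<dots> = 0" using kP fin e by (intro prod_zero) auto
    finally show ?thesis .
  qed
  ultimately show ?thesis by blast
qed

lemma scaleC_zero_right: "scaleC c (0::'a::comm_cbanach_algebra_1) = 0"
  using scaleC_add_right[of c "0::'a" 0] by simp

lemma clinear_add: "clinear K \<Longrightarrow> K (x + y) = K x + K y"
  by (simp add: clinear_def)

lemma clinear_scaleR: "clinear K \<Longrightarrow> K (scaleR r x) = scaleR r (K x)"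
  by (metis clinear_def scaleC_of_real)

lemma compact_op_bl:
  fixes K :: "'a::comm_cbanach_algebra_1 \<Rightarrow> 'a"
  assumes "compact_operator K"
  shows "bounded_linear K"
proof -
  have cl: "clinear K" using assms by (simp add: compact_operator_def)
  have "bounded (closure (K ` cball 0 1))"
    using assms by (simp add: compact_operator_def compact_imp_bounded)
  hence "bounded (K ` cball 0 1)" using bounded_subset closure_subset by blast
  then obtain B where B: "\<And>x. x \<in> cball 0 1 \<Longrightarrow> norm (K x) \<le> B"
    unfolding bounded_iff by blast
  show ?thesis
  proof (rule bounded_linear_intro[where K = B])
    fix x :: 'a
    show "norm (K x) \<le> norm x * B"
    proof (cases "x = 0")
      case True
      have "K 0 = 0" using clinear_add[OF cl, of 0 0] by simp
      then show ?thesis using True by simp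
    next
      case False
      define y where "y = scaleR (1 / norm x) x"
      have y: "y \<in> cball 0 1" using False by (simp add: y_def)
      have "x = scaleR (norm x) y" using False by (simp add: y_def)
      hence "K x = scaleR (norm x) (K y)" by (metis clinear_scaleR[OF cl])
      hence "norm (K x) = norm x * norm (K y)" by simp
      also have "\<dots> \<le> norm x * B" using B[OF y] by (simp add: mult_left_mono)
      finally show ?thesis .
    qed
  qed (use cl clinear_add clinear_scaleR in auto)
qed

lemma compact_op_zero: "compact_operator (\<lambda>x::'a::comm_cbanach_algebra_1. 0)"
proof -
  have "(0::'a) \<in> cball 0 1" by simp
  hence e: "(\<lambda>x::'a. 0) ` cball 0 1 = {0}" by blast
  show ?thesis unfolding compact_operator_def clinear_def e by (simp add: scaleC_zero_right)
qed

locale rz = dyn \<phi> for \<phi> :: "('a::comm_cbanach_algebra_1 \<Rightarrow> complex) \<Rightarrow> ('a \<Rightarrow> complex)" +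
  fixes T :: "'a \<Rightarrow> 'a"
  assumes ue: "unital_endomorphism T"
    and rs: "riesz_operator T"
    and ind: "\<And>f x. x \<in> max_ideal_space \<Longrightarrow> x (T f) = (\<phi> x) f"
begin

lemma ind_pow: "x \<in> XX \<Longrightarrow> x ((T ^^ n) f) = ((\<phi> ^^ n) x) f"
proof (induction n arbitrary: x)
  case (Suc n)
  have "x ((T ^^ Suc n) f) = x (T ((T ^^ n) f))" by simp
  also have "\<dots> = (\<phi> x) ((T ^^ n) f)" using ind Suc.prems by blast
  also have "\<dots> = ((\<phi> ^^ n) (\<phi> x)) f" using Suc maps by blast
  also have "\<dots> = ((\<phi> ^^ Suc n) x) f" by (simp add: funpow_Suc_right del: funpow.simps)
  finally show ?case .
qed simp

lemma bl_pow: "bounded_linear (T ^^ n)"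
proof (induction n)
  case 0
  then show ?case by (simp add: bounded_linear_ident id_def)
next
  case (Suc n)
  have "bounded_linear T" using rs by (simp add: riesz_operator_def bounded_operator_def)
  from bounded_linear_compose[OF this Suc] show ?case by (simp add: o_def)
qed

lemma small_ess: "\<exists>m. ess_norm (T ^^ m) < 1/8"
proof -
  have "(\<lambda>n. root n (ess_norm (T ^^ n))) \<longlonglongrightarrow> 0" using rs by (simp add: riesz_operator_def)
  from order_tendstoD(2)[OF this, of "1/8"] obtain N where
    N: "\<And>n. n \<ge> N \<Longrightarrow> root n (ess_norm (T ^^ n)) < 1/8"
    by (auto simp: eventually_sequentially)
  define m where "m = Suc N"
  have m: "root m (ess_norm (T ^^ m)) < 1/8" and m0: "0 < m" using N[of m] by (auto simp: m_def)
  show ?thesis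
  proof (rule exI[of _ m], rule ccontr)
    assume "\<not> ess_norm (T ^^ m) < 1/8"
    hence ge: "1/8 \<le> ess_norm (T ^^ m)" by simp
    have "(1/8::real) ^ m \<le> (1/8) ^ 1" by (rule power_decreasing) (use m0 in auto)
    hence "(1/8::real) ^ m \<le> ess_norm (T ^^ m)" using ge by simp
    hence "root m ((1/8) ^ m) \<le> root m (ess_norm (T ^^ m))" by (rule real_root_le_mono[OF m0])
    moreover have "root m ((1/8::real) ^ m) = 1/8" by (rule real_root_power_cancel[OF m0]) simp
    ultimately have "1/8 \<le> root m (ess_norm (T ^^ m))" by simp
    thus False using m by simp
  qed
qed

lemma net: "\<exists>m net. finite net \<and> (\<forall>g. norm g \<le> 1 \<longrightarrow> (\<exists>y\<in>net. norm ((T ^^ m) g - y) \<le> 1/4))"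
proof -
  obtain m where m: "ess_norm (T ^^ m) < 1/8" using small_ess by blast
  have ne: "{onorm (\<lambda>x. (T ^^ m) x - K x) | K. compact_operator K} \<noteq> {}"
    using compact_op_zero by blast
  from cInf_lessD[OF ne m[unfolded ess_norm_def]] obtain C where
    C: "compact_operator C" and Cn: "onorm (\<lambda>x. (T ^^ m) x - C x) < 1/8" by blast
  have bl: "bounded_linear (\<lambda>x. (T ^^ m) x - C x)"
    by (intro bounded_linear_sub bl_pow compact_op_bl[OF C])
  have S: "norm ((T ^^ m) g - C g) \<le> 1/8" if "norm g \<le> 1" for g
  proof -
    have "norm ((T ^^ m) g - C g) \<le> onorm (\<lambda>x. (T ^^ m) x - C x) * norm g"
      using onorm[OF bl] by simp
    also have "\<dots> \<le> 1/8 * 1"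
      by (rule mult_mono) (use Cn that onorm_pos_le[OF bl] in auto)
    finally show ?thesis by simp
  qed
  have "compact (closure (C ` cball 0 1))" using C by (simp add: compact_operator_def)
  hence "\<forall>e>0. \<exists>k. finite k \<and> closure (C ` cball 0 1) \<subseteq> (\<Union>x\<in>k. ball x e)"
    unfolding compact_eq_totally_bounded by blast
  hence "\<exists>k. finite k \<and> closure (C ` cball 0 1) \<subseteq> (\<Union>x\<in>k. ball x (1/8))"
    by (metis divide_pos_pos zero_less_numeral zero_less_one)
  then obtain net where net: "finite net" "closure (C ` cball 0 1) \<subseteq> (\<Union>x\<in>net. ball x (1/8))"
    by blast
  have W: "\<exists>y\<in>net. norm ((T ^^ m) g - y) \<le> 1/4" if g: "norm g \<le> 1" for g
  proof -
    have "g \<in> cball 0 1" using g by (simp add: mem_cball dist_norm)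
    hence "C g \<in> C ` cball 0 1" by (rule imageI)
    hence "C g \<in> closure (C ` cball 0 1)" by (rule subsetD[OF closure_subset])
    hence "C g \<in> (\<Union>x\<in>net. ball x (1/8))" using net(2) by (rule subsetD[rotated])
    then obtain y where y0: "y \<in> net" "C g \<in> ball y (1/8)" by (rule UN_E)
    have y: "y \<in> net" "dist y (C g) < 1/8" using y0 by (auto simp only: mem_ball)
    have "norm ((T ^^ m) g - y) \<le> norm ((T ^^ m) g - C g) + norm (C g - y)"
      using norm_triangle_ineq[of "(T ^^ m) g - C g" "C g - y"] by simp
    also have "norm (C g - y) = dist y (C g)" by (simp add: dist_norm norm_minus_commute[of y])
    also have "norm ((T ^^ m) g - C g) + dist y (C g) \<le> 1/4" using S[OF g] y(2) by simp
    finally show ?thesis using y(1) by blast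
  qed
  show ?thesis
    by (rule exI[of _ m], rule exI[of _ net]) (use net(1) W in auto)
qed

end

context rz
begin

lemma KK_char: "k \<in> KK \<Longrightarrow> character k"
  using KK_sub by (auto simp: max_ideal_space_def)

lemma pow_bound:
  fixes A :: real and b d N :: nat
  assumes A: "1 \<le> A" and bd: "b \<le> d" and bN: "b \<le> N"
  shows "A ^ b * (1/4) ^ (N - b) \<le> (4 * A) ^ d / 4 ^ N"
proof -
  have e4: "(4::real) ^ N = 4 ^ b * 4 ^ (N - b)" using bN by (simp add: power_add[symmetric])
  have "A ^ b * (1/4) ^ (N - b) = (4 * A) ^ b / 4 ^ N"
    unfolding e4 by (simp add: power_mult_distrib power_one_over field_simps)
  also have "\<dots> \<le> (4 * A) ^ d / 4 ^ N"
    by (intro divide_right_mono power_increasing bd) (use A in auto)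
  finally show ?thesis .
qed

lemma dt_zero:
  assumes ne: "KK \<noteq> {}"
  shows "\<exists>N. \<forall>k g. (\<forall>i<N. k i \<in> KK) \<and> (\<forall>j<N. norm (g j) \<le> 1) \<longrightarrow> dt N k g = 0"
proof -
  obtain m net where fn: "finite net" and W: "\<And>g. norm g \<le> 1 \<Longrightarrow> \<exists>y\<in>net. norm ((T ^^ m) g - y) \<le> 1/4"
    using net by blast
  define d where "d = card net"
  define A where "A = 1 + (\<Sum>y\<in>net. norm y)"
  have A1: "1 \<le> A" unfolding A_def by (simp add: sum_nonneg)
  have yA: "norm y \<le> A" if "y \<in> net" for y
  proof -
    have "norm y \<le> (\<Sum>y\<in>net. norm y)" by (rule member_le_sum) (use that fn in auto)
    thus ?thesis unfolding A_def by simp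
  qed
  obtain N where N: "(4 * A) ^ d < 2 ^ N" using real_arch_pow[of 2 "(4 * A) ^ d"] by auto
  define SD where "SD = {norm (dt N k g) | k g. (\<forall>i<N. k i \<in> KK) \<and> (\<forall>j<N. norm (g j) \<le> 1)}"
  have bdd: "bdd_above SD"
  proof (rule bdd_aboveI)
    fix x assume "x \<in> SD"
    then obtain k g where x: "x = norm (dt N k g)" and k: "\<forall>i<N. k i \<in> KK" and g: "\<forall>j<N. norm (g j) \<le> 1"
      unfolding SD_def by blast
    have "norm (dt N k g) \<le> fact N"
    proof (rule dt_bound)
      fix i j assume "i < N" "j < N"
      thus "norm (k i (g j)) \<le> 1" using char_bound[OF KK_char] k g by (meson order.trans)
    qed
    thus "x \<le> fact N" using x by simp
  qed
  obtain k0 where k0: "k0 \<in> KK" using ne by blast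
  have SDne: "SD \<noteq> {}"
  proof -
    have "norm (dt N (\<lambda>_. k0) (\<lambda>_. 0::'a)) \<in> SD" unfolding SD_def mem_Collect_eq
      by (rule exI[of _ "\<lambda>_. k0"], rule exI[of _ "\<lambda>_. 0::'a"]) (use k0 in simp)
    thus ?thesis by blast
  qed
  define D where "D = Sup SD"
  have leD: "x \<le> D" if "x \<in> SD" for x unfolding D_def by (rule cSup_upper[OF that bdd])
  have D0: "0 \<le> D"
  proof -
    obtain x where "x \<in> SD" using SDne by blast
    moreover then have "0 \<le> x" unfolding SD_def by auto
    ultimately show ?thesis using leD by force
  qed
  define c where "c = (4 * A) ^ d / 2 ^ N"
  have c1: "c < 1" unfolding c_def using N by simp
  have key: "norm (dt N k g) \<le> c * D" if k: "\<forall>i<N. k i \<in> KK" and g: "\<forall>j<N. norm (g j) \<le> 1" for k g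
  proof -
    have "\<forall>i. \<exists>x. i < N \<longrightarrow> x \<in> KK \<and> (\<phi> ^^ m) x = k i"
    proof
      fix i show "\<exists>x. i < N \<longrightarrow> x \<in> KK \<and> (\<phi> ^^ m) x = k i"
      proof (cases "i < N")
        case True
        then show ?thesis using KK_surj[of "k i" m] k by auto
      qed auto
    qed
    then obtain k' where k': "\<And>i. i < N \<Longrightarrow> k' i \<in> KK \<and> (\<phi> ^^ m) (k' i) = k i"
      by metis
    have "\<forall>j. \<exists>y. j < N \<longrightarrow> y \<in> net \<and> norm ((T ^^ m) (g j) - y) \<le> 1/4"
    proof
      fix j show "\<exists>y. j < N \<longrightarrow> y \<in> net \<and> norm ((T ^^ m) (g j) - y) \<le> 1/4"
      proof (cases "j < N")
        case True
        then show ?thesis using W g by blast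
      qed auto
    qed
    then obtain Y where Y: "\<And>j. j < N \<Longrightarrow> Y j \<in> net \<and> norm ((T ^^ m) (g j) - Y j) \<le> 1/4"
      by metis
    define H where "H j = (T ^^ m) (g j) - Y j" for j
    have ck: "character (k' i)" if "i < N" for i using k'[OF that] KK_char by blast
    have kX: "k' i \<in> XX" if "i < N" for i using k'[OF that] KK_sub by blast
    have e1: "dt N k g = dt N k' (\<lambda>j. (T ^^ m) (g j))"
    proof (rule dt_cong)
      fix i j assume i: "i < N" and "j < N"
      show "k i (g j) = k' i ((T ^^ m) (g j))"
        using ind_pow[OF kX[OF i], of m "g j"] k'[OF i] by simp
    qed
    have e2: "dt N k' (\<lambda>j. (T ^^ m) (g j)) = (\<Sum>B\<in>Pow {..<N}. dt N k' (\<lambda>j. if j \<in> B then Y j else H j))"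
    proof (rule dt_expand)
      fix i j assume i: "i < N" and "j < N"
      have "(T ^^ m) (g j) = Y j + H j" by (simp add: H_def)
      thus "k' i ((T ^^ m) (g j)) = k' i (Y j) + k' i (H j)" using char_add[OF ck[OF i]] by simp
    qed
    have bnd: "norm (dt N k' (\<lambda>j. if j \<in> B then Y j else H j)) \<le> (4 * A) ^ d / 4 ^ N * D"
      if B: "B \<subseteq> {..<N}" for B
    proof (cases "d < card B")
      case True
      have finB: "finite B" using B finite_subset by blast
      have "\<not> inj_on Y B"
      proof
        assume inj: "inj_on Y B"
        have "Y ` B \<subseteq> net" using Y B by blast
        hence "card (Y ` B) \<le> d" unfolding d_def using fn by (rule card_mono[rotated])
        thus False using card_image[OF inj] True by simp
      qed
      then obtain a b where ab: "a \<in> B" "b \<in> B" "a \<noteq> b" "Y a = Y b" unfolding inj_on_def by blast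
      have "dt N k' (\<lambda>j. if j \<in> B then Y j else H j) = 0"
        by (rule dt_ident[of a N b]) (use ab B in auto)
      then show ?thesis using D0 A1 by simp
    next
      case False
      hence bd: "card B \<le> d" by simp
      have finB: "finite B" using B finite_subset by blast
      have bN: "card B \<le> N" using card_mono[OF _ B] by simp
      have A0: "complex_of_real A \<noteq> 0" using A1 by simp
      define cc where "cc j = (if j \<in> B then complex_of_real A else 1/4)" for j
      define u where "u j = (if j \<in> B then scaleC (1 / complex_of_real A) (Y j) else scaleC 4 (H j))" for j
      have sc: "dt N k' (\<lambda>j. if j \<in> B then Y j else H j) = (\<Prod>j<N. cc j) * dt N k' u"
      proof (rule dt_scale)
        fix i j assume i: "i < N" and "j < N"
        show "k' i (if j \<in> B then Y j else H j) = cc j * k' i (u j)"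
          using A0 by (simp add: cc_def u_def char_scaleC[OF ck[OF i]])
      qed
      have un: "norm (u j) \<le> 1" if j: "j < N" for j
      proof (cases "j \<in> B")
        case True
        have "norm (u j) = norm (Y j) / A" using True A1 by (simp add: u_def norm_scaleC norm_divide)
        also have "\<dots> \<le> 1" using yA[of "Y j"] Y[OF j] A1 by simp
        finally show ?thesis .
      next
        case False
        have "norm (u j) = 4 * norm (H j)" using False by (simp add: u_def norm_scaleC)
        also have "\<dots> \<le> 1" using Y[OF j] by (simp add: H_def)
        finally show ?thesis .
      qed
      have "norm (dt N k' u) \<in> SD" unfolding SD_def using k' un by blast
      hence du: "norm (dt N k' u) \<le> D" by (rule leD)
      have "norm (\<Prod>j<N. cc j) = (\<Prod>j<N. norm (cc j))" by (rule prod_norm[symmetric])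
      also have "\<dots> = (\<Prod>j<N. if j \<in> B then A else 1/4)"
        using A1 by (intro prod.cong) (auto simp: cc_def)
      also have "\<dots> = (\<Prod>j\<in>{..<N} \<inter> {j. j \<in> B}. A) * (\<Prod>j\<in>{..<N} \<inter> - {j. j \<in> B}. 1/4)"
        by (rule prod.If_cases) simp
      also have "{..<N} \<inter> {j. j \<in> B} = B" using B by auto
      also have "{..<N} \<inter> - {j. j \<in> B} = {..<N} - B" by auto
      also have "card ({..<N} - B) = N - card B" using B finB by (simp add: card_Diff_subset)
      hence "(\<Prod>j\<in>{..<N} - B. (1/4::real)) = (1/4) ^ (N - card B)" by simp
      finally have pc: "norm (\<Prod>j<N. cc j) = A ^ card B * (1/4) ^ (N - card B)" by simp
      have "norm (dt N k' (\<lambda>j. if j \<in> B then Y j else H j)) = norm (\<Prod>j<N. cc j) * norm (dt N k' u)"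
        unfolding sc by (rule norm_mult)
      also have "\<dots> \<le> (4 * A) ^ d / 4 ^ N * D"
        unfolding pc by (rule mult_mono[OF pow_bound[OF A1 bd bN] du]) (use A1 D0 in auto)
      finally show ?thesis .
    qed
    have "norm (dt N k g) \<le> (\<Sum>B\<in>Pow {..<N}. norm (dt N k' (\<lambda>j. if j \<in> B then Y j else H j)))"
      unfolding e1 e2 by (rule norm_sum)
    also have "\<dots> \<le> (\<Sum>B\<in>Pow {..<N}. (4 * A) ^ d / 4 ^ N * D)"
      by (rule sum_mono) (use bnd in auto)
    also have "\<dots> = 2 ^ N * ((4 * A) ^ d / 4 ^ N * D)" by (simp add: card_Pow)
    also have "\<dots> = c * D"
    proof -
      have "(4::real) ^ N = 2 ^ N * 2 ^ N" by (simp add: power_mult_distrib[symmetric])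
      thus ?thesis unfolding c_def by (simp add: field_simps)
    qed
    finally show ?thesis .
  qed
  have "D \<le> c * D" unfolding D_def[symmetric]
  proof (subst D_def, rule cSup_least[OF SDne])
    fix x assume "x \<in> SD"
    then obtain k g where "x = norm (dt N k g)" "\<forall>i<N. k i \<in> KK" "\<forall>j<N. norm (g j) \<le> 1"
      unfolding SD_def by blast
    thus "x \<le> c * D" using key by simp
  qed
  hence D00: "D \<le> 0" using c1 D0 by (metis mult_less_cancel_right2 not_le order.trans)
  show ?thesis
  proof (rule exI[of _ N], intro allI impI)
    fix k :: "nat \<Rightarrow> 'a \<Rightarrow> complex" and g :: "nat \<Rightarrow> 'a" assume a: "(\<forall>i<N. k i \<in> KK) \<and> (\<forall>j<N. norm (g j) \<le> 1)"
    hence "norm (dt N k g) \<in> SD" unfolding SD_def by blast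
    hence "norm (dt N k g) \<le> 0" using leD[of "norm (dt N k g)"] D00 by linarith
    thus "dt N k g = 0" by simp
  qed
qed

end

context rz
begin

lemma KK_finite:
  assumes ne: "KK \<noteq> {}"
  shows "finite KK"
proof (rule ccontr)
  assume inf: "infinite KK"
  obtain N where N: "\<And>k g. (\<forall>i<N. k i \<in> KK) \<and> (\<forall>j<N. norm (g j) \<le> 1) \<Longrightarrow> dt N k g = 0"
    using dt_zero[OF ne] by blast
  obtain P where P: "finite P" "card P = N" "P \<subseteq> KK" using infinite_arbitrarily_large[OF inf] by blast
  obtain h where h: "bij_betw h {0..<card P} P" using ex_bij_betw_nat_finite[OF P(1)] by blast
  have hK: "h i \<in> KK" if "i < N" for i using h P that by (auto simp: bij_betw_def)
  have hinj: "inj_on h {..<N}" using h P by (simp add: bij_betw_def atLeast0LessThan)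
  have "\<forall>j. \<exists>L. j < N \<longrightarrow> h j L = 1 \<and> (\<forall>q\<in>h ` ({..<N} - {j}). q L = 0)"
  proof
    fix j show "\<exists>L. j < N \<longrightarrow> h j L = 1 \<and> (\<forall>q\<in>h ` ({..<N} - {j}). q L = 0)"
    proof (cases "j < N")
      case True
      have "h ` ({..<N} - {j}) \<subseteq> XX" using hK KK_sub by blast
      moreover have "h j \<in> XX" using hK[OF True] KK_sub by blast
      moreover have "h j \<notin> h ` ({..<N} - {j})" using hinj True by (auto simp: inj_on_def)
      ultimately show ?thesis using lagrange[of "h ` ({..<N} - {j})" "h j"] by blast
    qed auto
  qed
  then obtain L where L: "\<And>j. j < N \<Longrightarrow> h j (L j) = 1 \<and> (\<forall>q\<in>h ` ({..<N} - {j}). q (L j) = 0)"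
    by metis
  have delta: "h i (L j) = (if i = j then 1 else 0)" if "i < N" "j < N" for i j
    using L[OF that(2)] that by auto
  define cc where "cc j = complex_of_real (1 / (norm (L j) + 1))" for j
  define g where "g j = scaleC (cc j) (L j)" for j
  have gn: "norm (g j) \<le> 1" for j
  proof -
    have c: "norm (cc j) = 1 / (norm (L j) + 1)"
      unfolding cc_def norm_of_real by simp
    have "norm (g j) = norm (cc j) * norm (L j)" unfolding g_def by (rule norm_scaleC)
    also have "\<dots> = norm (L j) / (norm (L j) + 1)" unfolding c by simp
    also have "\<dots> \<le> 1" by (simp add: divide_le_eq_1 add_nonneg_pos)
    finally show ?thesis .
  qed
  have "dt N h g = (\<Prod>j<N. cc j) * dt N h L"
  proof (rule dt_scale)
    fix i j assume i: "i < N" and "j < N"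
    have "character (h i)" using hK[OF i] KK_char by blast
    thus "h i (g j) = cc j * h i (L j)" by (simp add: g_def char_scaleC)
  qed
  also have "dt N h L = 1" by (rule dt_delta) (rule delta)
  finally have "dt N h g = (\<Prod>j<N. cc j)" by simp
  moreover have "(\<Prod>j<N. cc j) \<noteq> 0"
  proof -
    have "cc j \<noteq> 0" for j
    proof -
      have "0 < norm (L j) + 1" by (simp add: add_nonneg_pos)
      hence "norm (cc j) > 0" unfolding cc_def norm_of_real by simp
      thus ?thesis by auto
    qed
    thus ?thesis by simp
  qed
  moreover have "dt N h g = 0" by (rule N) (use hK gn in auto)
  ultimately show False by simp
qed

lemma KK_single:
  assumes ne: "KK \<noteq> {}" and conn: "connected XX"
  shows "\<exists>x0. KK = {x0}"
proof (rule ccontr)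
  assume ns: "\<not> ?thesis"
  obtain a where a: "a \<in> KK" using ne by blast
  obtain b where b: "b \<in> KK" "b \<noteq> a" using ns a by blast
  have fin: "finite (KK - {a})" using KK_finite[OF ne] by simp
  obtain L where L: "a L = 1" "\<And>k. k \<in> KK - {a} \<Longrightarrow> k L = 0"
    using lagrange[OF fin _ _, of a] KK_sub a by blast
  define V where "V = XX \<inter> {x. 1/3 \<le> norm (x L)} \<inter> {x. 1/3 \<le> norm (x L - 1)}"
  have cV: "closed V" unfolding V_def
    by (intro closed_Int closed_max_ideal_space closed_Collect_le continuous_intros
        continuous_on_compose2[OF continuous_on_norm_id] ; simp)
  have "V \<inter> KK = {}"
  proof (rule ccontr)
    assume "V \<inter> KK \<noteq> {}"
    then obtain x where x: "x \<in> V" "x \<in> KK" by blast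
    show False
    proof (cases "x = a")
      case True
      then show ?thesis using x L by (simp add: V_def)
    next
      case False
      hence "x L = 0" using L(2) x(2) by blast
      then show ?thesis using x(1) by (simp add: V_def)
    qed
  qed
  then obtain n where n: "V \<inter> Y n = {}" using avoid[OF cV] by blast
  define F where "F x = ((\<phi> ^^ n) x) L" for x
  have cF: "continuous_on XX F"
  proof -
    have "continuous_on XX ((\<lambda>g. g L) \<circ> (\<phi> ^^ n))"
      by (rule continuous_on_compose[OF cont_funpow continuous_on_subset[OF continuous_on_product_coordinates]]) simp
    thus ?thesis by (simp add: o_def F_def)
  qed
  have cFX: "connected (F ` XX)" by (rule connected_continuous_image[OF cF conn])
  have sub: "F ` XX \<subseteq> ball 0 (1/3) \<union> ball 1 (1/3)"
  proof
    fix z assume "z \<in> F ` XX"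
    then obtain x where x: "x \<in> XX" "z = F x" by blast
    have "(\<phi> ^^ n) x \<in> Y n" using x unfolding Y_def by blast
    moreover have "(\<phi> ^^ n) x \<in> XX" using funpow_mem x by blast
    ultimately have "\<not> (1/3 \<le> norm (z) \<and> 1/3 \<le> norm (z - 1))"
      using n x unfolding V_def F_def by blast
    thus "z \<in> ball 0 (1/3) \<union> ball 1 (1/3)" by (auto simp: dist_norm norm_minus_commute[of 1 z])
  qed
  have dis: "ball (0::complex) (1/3) \<inter> ball 1 (1/3) \<inter> F ` XX = {}"
  proof -
    have "ball (0::complex) (1/3) \<inter> ball 1 (1/3) = {}"
    proof (rule ccontr)
      assume "ball (0::complex) (1/3) \<inter> ball 1 (1/3) \<noteq> {}"
      then obtain z :: complex where z: "norm z < 1/3" "norm (1 - z) < 1/3" by (auto simp: dist_norm)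
      have "norm (1::complex) \<le> norm z + norm (1 - z)" using norm_triangle_ineq[of z "1 - z"] by simp
      thus False using z by simp
    qed
    thus ?thesis by blast
  qed
  obtain a' where a': "a' \<in> KK" "(\<phi> ^^ n) a' = a" using KK_surj[OF a] by blast
  obtain b' where b': "b' \<in> KK" "(\<phi> ^^ n) b' = b" using KK_surj[OF b(1)] by blast
  have "F a' = 1" using a' L by (simp add: F_def)
  hence "1 \<in> ball 1 (1/3) \<inter> F ` XX" using a' KK_sub by force
  moreover have "F b' = 0" using b' L(2)[of b] b by (simp add: F_def)
  hence "0 \<in> ball 0 (1/3) \<inter> F ` XX" using b' KK_sub by force
  moreover note connectedD[OF cFX open_ball open_ball dis sub]
  ultimately show False by blast
qed

end

theorem theorem1p1:
  fixes T :: "'a::comm_cbanach_algebra_1 \<Rightarrow> 'a"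
    and \<phi> :: "('a \<Rightarrow> complex) \<Rightarrow> ('a \<Rightarrow> complex)"
  assumes "semisimple TYPE('a)"
    and "connected (max_ideal_space :: ('a \<Rightarrow> complex) set)"
    and "unital_endomorphism T"
    and "riesz_operator T"
    and "induced_by T \<phi>"
  shows "\<exists>x0\<in>max_ideal_space.
           (\<Inter>n. (\<phi> ^^ n) ` max_ideal_space) = {x0} \<and> \<phi> x0 = x0 \<and>
           (\<forall>x\<in>max_ideal_space. \<phi> x = x \<longrightarrow> x = x0)"
proof -
  have "rz \<phi> T"
    unfolding rz_def rz_axioms_def dyn_def using assms(3,4,5) by (auto simp: induced_by_def)
  then interpret R: rz \<phi> T .
  have XXne: "(max_ideal_space :: ('a \<Rightarrow> complex) set) \<noteq> {}"
  proof
    assume "(max_ideal_space :: ('a \<Rightarrow> complex) set) = {}"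
    hence "(1::'a) = 0" using assms(1) unfolding semisimple_def by blast
    thus False by simp
  qed
  have Kne: "R.KK \<noteq> {}" by (rule R.KK_ne[OF XXne])
  obtain x0 where x0: "R.KK = {x0}" using R.KK_single[OF Kne assms(2)] by blast
  have eqK: "(\<Inter>n. (\<phi> ^^ n) ` max_ideal_space) = R.KK" unfolding R.KK_def R.Y_def by simp
  have x0X: "x0 \<in> max_ideal_space" using x0 R.KK_sub by blast
  have "\<phi> x0 \<in> R.KK"
    unfolding R.KK_def
  proof
    fix n :: nat
    have "x0 \<in> R.Y n" using x0 unfolding R.KK_def by blast
    then obtain z where z: "z \<in> max_ideal_space" "x0 = (\<phi> ^^ n) z" unfolding R.Y_def by blast
    hence "\<phi> x0 = (\<phi> ^^ Suc n) z" by simp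
    hence "\<phi> x0 \<in> R.Y (Suc n)" using z(1) unfolding R.Y_def by blast
    moreover have "R.Y (Suc n) \<subseteq> R.Y n" by (rule R.Y_decr) simp
    ultimately show "\<phi> x0 \<in> R.Y n" by blast
  qed
  hence fx: "\<phi> x0 = x0" using x0 by blast
  have uq: "x = x0" if x: "x \<in> max_ideal_space" "\<phi> x = x" for x
  proof -
    have fp: "(\<phi> ^^ n) x = x" for n by (induction n) (use x(2) in simp_all)
    have "x \<in> R.Y n" for n unfolding R.Y_def using fp[of n] x(1) by (metis image_eqI)
    hence "x \<in> R.KK" unfolding R.KK_def by blast
    thus ?thesis using x0 by blast
  qed
  show ?thesis using x0X eqK x0 fx uq by blast
qed

end
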